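(* Let $f(w)=\frac12w^TAw-b^Tw+c$ with $A\in\mathbb{R}^{n\times n}$ symmetric positive definite with eigenvalues $0<\lambda_1\le\dots\le\lambda_n$, and let $x^*=A^{-1}b$ be its unique minimizer. Let $x^1\in\mathbb{R}^n$ be arbitrary and let $\{x^k\}$ be generated by the Method of Ellipcenters (ME) described in the context. If ME stops at some iterate $x^k$, then $x^k=x^*$. Otherwise, $x^k\to x^*$ linearly: there exists $\eta\in[0,1)$ with $\eta\le 1-\frac{\lambda_1}{\lambda_n}$ such that for all $k\ge1$, $$f(x^{k+1})-f(x^* )\le \eta^k\,(f(x^1)-f(x^* ))\quad\text{and}\quad \|x^{k+1}-x^*\|_A\le (\sqrt{\eta})^k\,\|x^1-x^*\|_A.$$
   Context: $\|z\|_A=\sqrt{z^TAz}$, $\nabla f(w)=Aw-b$. Method of Ellipcenters (ME) for this $f$: given $x^k$, if $\nabla f(x^k)=0$ stop and return $x^k$. Otherwise set $t_k=\frac{2\nabla f(x^k)^T\nabla f(x^k)}{\nabla f(x^k)^TA\nabla f(x^k)}$ and $y^k=x^k-t_k\nabla f(x^k)$. If $g_x=\nabla f(x^k)$ and $g_y=\nabla f(y^k)$ are linearly independent, set $x^{k+1}=x^k+\alpha_kg_x+\beta_kg_y$, where, with $\Delta_k=\langle g_y,Ag_y\rangle\langle g_x,Ag_x\rangle-\langle g_x,Ag_y\rangle^2$, $\alpha_k=\frac{\langle g_y,g_x\rangle\langle g_x,Ag_y\rangle-\langle g_x,g_x\rangle\langle g_y,Ag_y\rangle}{\Delta_k}$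 and $\beta_k=\frac{-\langle g_y,g_x\rangle\langle g_x,Ag_x\rangle+\langle g_x,g_x\rangle\langle g_y,Ag_x\rangle}{\Delta_k}$ (equivalently, $x^{k+1}$ is the minimizer of $f$ over the affine plane $x^k+\mathrm{span}\{g_x,g_y\}$). If $g_x,g_y$ are linearly dependent, set $x^{k+1}=\frac12(x^k+y^k)$. Then increase $k$ by one and repeat. *)

theory Defs
  imports "HOL-Analysis.Analysis"
begin

definition quad_f :: "real^'n^'n \<Rightarrow> real^'n \<Rightarrow> real \<Rightarrow> real^'n \<Rightarrow> real" where
  "quad_f A b c w = (1/2) * (w \<bullet> (A *v w)) - b \<bullet> w + c"

definition grad_f :: "real^'n^'n \<Rightarrow> real^'n \<Rightarrow> real^'n \<Rightarrow> real^'n" where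
  "grad_f A b w = A *v w - b"

definition A_norm :: "real^'n^'n \<Rightarrow> real^'n \<Rightarrow> real" where
  "A_norm A z = sqrt (z \<bullet> (A *v z))"

definition sym_pos_def :: "real^'n^'n \<Rightarrow> bool" where
  "sym_pos_def A \<longleftrightarrow> transpose A = A \<and> (\<forall>v. v \<noteq> 0 \<longrightarrow> v \<bullet> (A *v v) > 0)"

definition eigenvals :: "real^'n^'n \<Rightarrow> real set" where
  "eigenvals A = {l. \<exists>v. v \<noteq> 0 \<and> A *v v = l *\<^sub>R v}"

definition lin_indep2 :: "real^'n \<Rightarrow> real^'n \<Rightarrow> bool" where
  "lin_indep2 u v \<longleftrightarrow> (\<forall>a b. a *\<^sub>R u + b *\<^sub>R v = 0 \<longrightarrow> a = 0 \<and> b = 0)"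

definition ME_step :: "real^'n^'n \<Rightarrow> real^'n \<Rightarrow> real^'n \<Rightarrow> real^'n" where
  "ME_step A b x =
    (let gx = grad_f A b x;
         t = 2 * (gx \<bullet> gx) / (gx \<bullet> (A *v gx));
         y = x - t *\<^sub>R gx;
         gy = grad_f A b y
     in if lin_indep2 gx gy then
          (let \<Delta> = (gy \<bullet> (A *v gy)) * (gx \<bullet> (A *v gx)) - (gx \<bullet> (A *v gy))^2;
               \<alpha> = ((gy \<bullet> gx) * (gx \<bullet> (A *v gy)) - (gx \<bullet> gx) * (gy \<bullet> (A *v gy))) / \<Delta>;
               \<beta> = (- (gy \<bullet> gx) * (gx \<bullet> (A *v gx)) + (gx \<bullet> gx) * (gy \<bullet> (A *v gx))) / \<Delta>
           in x + \<alpha> *\<^sub>R gx + \<beta> *\<^sub>R gy)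
        else (1/2) *\<^sub>R (x + y))"

end

theory Submission
  imports Defs
begin


lemma sym_dot:
  fixes A :: "real^'n^'n"
  assumes "transpose A = A"
  shows "(A *v u) \<bullet> w = u \<bullet> (A *v w)"
  by (metis assms dot_lmul_matrix transpose_matrix_vector inner_commute)

lemma quad_expand:
  fixes A :: "real^'n^'n"
  assumes "transpose A = A"
  shows "quad_f A b c (u + h) = quad_f A b c u + grad_f A b u \<bullet> h + 1/2 * (h \<bullet> (A *v h))"
proof -
  have "h \<bullet> (A *v u) = u \<bullet> (A *v h)" using sym_dot[OF assms, of u h] by (simp add: inner_commute)
  then show ?thesis
    unfolding quad_f_def grad_f_def
    by (simp add: matrix_vector_right_distrib inner_add_left inner_add_right inner_diff_left algebra_simps inner_commute)
qed

lemma psd_zero: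
  fixes L :: "real^'n \<Rightarrow> real^'n"
  assumes lin: "linear L" and sym: "\<And>u w. L u \<bullet> w = u \<bullet> L w"
    and ge: "\<And>w. w \<bullet> L w \<ge> 0" and z: "v \<bullet> L v = 0"
  shows "L v = 0"
proof (rule ccontr)
  assume nz: "L v \<noteq> 0"
  define r where "r = L v"
  define c where "c = r \<bullet> L r"
  have rr: "r \<bullet> r > 0" using nz r_def by simp
  define s where "s = (r \<bullet> r) / (\<bar>c\<bar> + 1)"
  have s0: "s > 0" using rr s_def by (simp add: add_pos_nonneg)
  have ss: "s * (\<bar>c\<bar> + 1) = r \<bullet> r" using s_def by (simp add: add_pos_nonneg field_simps)
  have "(v - s *\<^sub>R r) \<bullet> L (v - s *\<^sub>R r) = v \<bullet> L v - s * (r \<bullet> L v) - s * (v \<bullet> L r) + s^2 * c"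
    using lin unfolding c_def
    by (simp add: linear_diff linear_scale inner_diff_left inner_diff_right power2_eq_square algebra_simps)
  also have "v \<bullet> L r = r \<bullet> L v" using sym[of r v] by (simp add: inner_commute)
  also have "r \<bullet> L v = r \<bullet> r" using r_def by simp
  finally have e: "(v - s *\<^sub>R r) \<bullet> L (v - s *\<^sub>R r) = - 2 * s * (r \<bullet> r) + s^2 * c" using z by simp
  have "s^2 * c \<le> s * (s * \<bar>c\<bar>)" using s0 by (simp add: power2_eq_square mult_left_mono)
  also have "s * (s * \<bar>c\<bar>) < s * (r \<bullet> r)" using s0 ss by (simp add: algebra_simps)
  finally have lt: "s^2 * c < s * (r \<bullet> r)" .
  have "s * (r \<bullet> r) > 0" using s0 rr by simp
  then have "- 2 * s * (r \<bullet> r) + s^2 * c < 0" using lt by linarith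
  with e ge[of "v - s *\<^sub>R r"] show False by simp
qed


lemma quadform_scale:
  fixes A :: "real^'n^'n"
  shows "(k *\<^sub>R w) \<bullet> (A *v (k *\<^sub>R w)) = k^2 * (w \<bullet> (A *v w))"
  by (simp add: matrix_vector_mult_scaleR power2_eq_square)

lemma key_scale:
  fixes A :: "real^'n^'n"
  assumes "w \<noteq> 0" "u = (1 / norm w) *\<^sub>R w"
  shows "w \<bullet> (A *v w) = (norm w)^2 * (u \<bullet> (A *v u)) \<and> w \<bullet> w = (norm w)^2 \<and> u \<in> sphere 0 1"
proof -
  have "u \<bullet> (A *v u) = (1 / norm w)^2 * (w \<bullet> (A *v w))" using assms(2) quadform_scale[of "1 / norm w" w A] by simp
  then show ?thesis using assms by (simp add: power2_norm_eq_inner[symmetric] field_simps)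
qed

lemma rayleigh_lower:
  fixes A :: "real^'n^'n"
  assumes T: "\<forall>y\<in>sphere (0::real^'n) 1. m \<le> y \<bullet> (A *v y)"
  shows "m * (w \<bullet> w) \<le> w \<bullet> (A *v w)"
proof (cases "w = 0")
  case False
  define u where "u = (1 / norm w) *\<^sub>R w"
  from key_scale[OF False u_def, of A] T have "m \<le> u \<bullet> (A *v u)" by simp
  with key_scale[OF False u_def, of A] show ?thesis by (simp add: mult_right_mono mult.commute)
qed simp

lemma rayleigh_upper:
  fixes A :: "real^'n^'n"
  assumes T: "\<forall>y\<in>sphere (0::real^'n) 1. y \<bullet> (A *v y) \<le> m"
  shows "w \<bullet> (A *v w) \<le> m * (w \<bullet> w)"
proof (cases "w = 0")
  case False
  define u where "u = (1 / norm w) *\<^sub>R w"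
  from key_scale[OF False u_def, of A] T have "u \<bullet> (A *v u) \<le> m" by simp
  with key_scale[OF False u_def, of A] show ?thesis by (simp add: mult_right_mono mult.commute)
qed simp

lemma sphere_ne: "sphere (0::real^'n) 1 \<noteq> {}"
proof -
  obtain x :: "real^'n" where "norm x = 1" using vector_choose_size[of 1] by auto
  then show ?thesis by auto
qed

lemma cont_q: "continuous_on S (\<lambda>w::real^'n. w \<bullet> (A *v w))"
  by (intro continuous_intros)

lemma rayleigh_min:
  fixes A :: "real^'n^'n"
  assumes sym: "transpose A = A"
  shows "\<exists>m. m \<in> eigenvals A \<and> (\<forall>w. m * (w \<bullet> w) \<le> w \<bullet> (A *v w))"
proof -
  obtain v where v: "v \<in> sphere (0::real^'n) 1" "\<forall>y\<in>sphere 0 1. v \<bullet> (A *v v) \<le> y \<bullet> (A *v y)"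
    using continuous_attains_inf[OF compact_sphere sphere_ne cont_q] by blast
  define m where "m = v \<bullet> (A *v v)"
  have vv: "v \<bullet> v = 1" using v(1) by (simp add: power2_norm_eq_inner[symmetric])
  have ge: "\<forall>w. m * (w \<bullet> w) \<le> w \<bullet> (A *v w)"
    using rayleigh_lower[of m A] v(2) m_def by blast
  define L where "L = (\<lambda>w. A *v w - m *\<^sub>R w)"
  have lin: "linear L" unfolding L_def
    by (rule linearI) (simp_all add: matrix_vector_right_distrib matrix_vector_mult_scaleR algebra_simps)
  have "L v = 0"
  proof (rule psd_zero[OF lin])
    show "L u \<bullet> w = u \<bullet> L w" for u w
      unfolding L_def using sym_dot[OF sym, of u w] by (simp add: inner_diff_left inner_diff_right inner_commute)
    show "0 \<le> w \<bullet> L w" for w using ge unfolding L_def by (simp add: inner_diff_right)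
    show "v \<bullet> L v = 0" unfolding L_def using vv m_def by (simp add: inner_diff_right)
  qed
  then have "A *v v = m *\<^sub>R v" unfolding L_def by simp
  moreover have "v \<noteq> 0" using v(1) by auto
  ultimately have "m \<in> eigenvals A" unfolding eigenvals_def by blast
  then show ?thesis using ge by blast
qed


lemma rayleigh_max:
  fixes A :: "real^'n^'n"
  assumes sym: "transpose A = A"
  shows "\<exists>M. M \<in> eigenvals A \<and> (\<forall>w. w \<bullet> (A *v w) \<le> M * (w \<bullet> w))"
proof -
  obtain v where v: "v \<in> sphere (0::real^'n) 1" "\<forall>y\<in>sphere 0 1. y \<bullet> (A *v y) \<le> v \<bullet> (A *v v)"
    using continuous_attains_sup[OF compact_sphere sphere_ne cont_q] by blast
  define m where "m = v \<bullet> (A *v v)"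
  have vv: "v \<bullet> v = 1" using v(1) by (simp add: power2_norm_eq_inner[symmetric])
  have ge: "\<forall>w. w \<bullet> (A *v w) \<le> m * (w \<bullet> w)"
    using rayleigh_upper[of A m] v(2) m_def by blast
  define L where "L = (\<lambda>w. m *\<^sub>R w - A *v w)"
  have lin: "linear L" unfolding L_def
    by (rule linearI) (simp_all add: matrix_vector_right_distrib matrix_vector_mult_scaleR algebra_simps)
  have "L v = 0"
  proof (rule psd_zero[OF lin])
    show "L u \<bullet> w = u \<bullet> L w" for u w
      unfolding L_def using sym_dot[OF sym, of u w] by (simp add: inner_diff_left inner_diff_right inner_commute)
    show "0 \<le> w \<bullet> L w" for w using ge unfolding L_def by (simp add: inner_diff_right)
    show "v \<bullet> L v = 0" unfolding L_def using vv m_def by (simp add: inner_diff_right)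
  qed
  then have "A *v v = m *\<^sub>R v" unfolding L_def by simp
  moreover have "v \<noteq> 0" using v(1) by auto
  ultimately have "m \<in> eigenvals A" unfolding eigenvals_def by blast
  then show ?thesis using ge by blast
qed

lemma eigenvals_finite:
  fixes A :: "real^'n^'n"
  assumes sym: "transpose A = A"
  shows "finite (eigenvals A)"
proof -
  define E where "E = eigenvals A"
  define ev where "ev = (\<lambda>l. SOME v. v \<noteq> 0 \<and> A *v v = l *\<^sub>R v)"
  have evp: "ev l \<noteq> 0 \<and> A *v ev l = l *\<^sub>R ev l" if "l \<in> E" for l
    using that unfolding E_def eigenvals_def ev_def by (metis (mono_tags, lifting) mem_Collect_eq someI_ex)
  have orth: "ev l \<bullet> ev k = 0" if "l \<in> E" "k \<in> E" "l \<noteq> k" for l k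
  proof -
    have "l * (ev l \<bullet> ev k) = (A *v ev l) \<bullet> ev k" using evp[OF that(1)] by simp
    also have "\<dots> = ev l \<bullet> (A *v ev k)" by (rule sym_dot[OF sym])
    also have "\<dots> = k * (ev l \<bullet> ev k)" using evp[OF that(2)] by simp
    finally show ?thesis using that(3) by simp
  qed
  have inj: "inj_on ev E"
  proof (rule inj_onI)
    fix l k assume h: "l \<in> E" "k \<in> E" "ev l = ev k"
    show "l = k"
    proof (rule ccontr)
      assume "l \<noteq> k"
      then have "ev l \<bullet> ev l = 0" using orth[OF h(1,2)] h(3) by simp
      then show False using evp[OF h(1)] by simp
    qed
  qed
  have "pairwise orthogonal (ev ` E)"
    unfolding pairwise_def orthogonal_def using orth by auto
  moreover have "0 \<notin> ev ` E" using evp by auto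
  ultimately have "independent (ev ` E)" by (rule pairwise_orthogonal_independent)
  then have "finite (ev ` E)" using independent_bound by blast
  then show ?thesis using finite_imageD[OF _ inj] E_def by blast
qed

lemma eigen_facts:
  fixes A :: "real^'n^'n"
  assumes spd: "sym_pos_def A"
  shows "0 < Min (eigenvals A) \<and> Min (eigenvals A) \<le> Max (eigenvals A)
     \<and> (\<forall>w. Min (eigenvals A) * (w \<bullet> w) \<le> w \<bullet> (A *v w))
     \<and> (\<forall>w. w \<bullet> (A *v w) \<le> Max (eigenvals A) * (w \<bullet> w))"
proof -
  have sym: "transpose A = A" and pd: "\<And>v. v \<noteq> 0 \<Longrightarrow> v \<bullet> (A *v v) > 0"
    using spd unfolding sym_pos_def_def by auto
  obtain m where m: "m \<in> eigenvals A" "\<forall>w. m * (w \<bullet> w) \<le> w \<bullet> (A *v w)" using rayleigh_min[OF sym] by blast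
  obtain M where M: "M \<in> eigenvals A" "\<forall>w. w \<bullet> (A *v w) \<le> M * (w \<bullet> w)" using rayleigh_max[OF sym] by blast
  have fin: "finite (eigenvals A)" by (rule eigenvals_finite[OF sym])
  have lb: "m \<le> l \<and> l \<le> M" if lin: "l \<in> eigenvals A" for l
  proof -
    obtain v where v: "v \<noteq> 0" "A *v v = l *\<^sub>R v" using lin unfolding eigenvals_def by auto
    have q: "v \<bullet> (A *v v) = l * (v \<bullet> v)" using v by simp
    have vv: "v \<bullet> v > 0" using v by simp
    have "m * (v \<bullet> v) \<le> l * (v \<bullet> v)" using m(2) q by metis
    moreover have "l * (v \<bullet> v) \<le> M * (v \<bullet> v)" using M(2) q by metis
    ultimately show ?thesis using vv by (meson mult_le_cancel_right_pos)
  qed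
  have "Min (eigenvals A) = m" by (rule Min_eqI[OF fin]) (use lb m in auto)
  moreover have "Max (eigenvals A) = M" by (rule Max_eqI[OF fin]) (use lb M in auto)
  moreover have "m > 0"
  proof -
    obtain v where v: "v \<noteq> 0" "A *v v = m *\<^sub>R v" using m(1) unfolding eigenvals_def by blast
    have "v \<bullet> (A *v v) = m * (v \<bullet> v)" using v by simp
    moreover have "v \<bullet> (A *v v) > 0" using pd v(1) by blast
    moreover have "v \<bullet> v > 0" using v by simp
    ultimately show ?thesis by (simp add: zero_less_mult_iff)
  qed
  ultimately show ?thesis using lb[OF m(1)] m M by auto
qed


lemma me_step_le:
  fixes A :: "real^'n^'n"
  assumes spd: "sym_pos_def A" and gnz: "grad_f A b x \<noteq> 0"
  shows "quad_f A b c (ME_step A b x)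
     \<le> quad_f A b c (x - ((grad_f A b x \<bullet> grad_f A b x) / (grad_f A b x \<bullet> (A *v grad_f A b x))) *\<^sub>R grad_f A b x)"
proof -
  have sym: "transpose A = A" and pd: "\<And>v. v \<noteq> 0 \<Longrightarrow> v \<bullet> (A *v v) > 0"
    using spd unfolding sym_pos_def_def by auto
  have psd: "h \<bullet> (A *v h) \<ge> 0" for h using pd[of h] by (cases "h = 0") auto
  define gx where "gx = grad_f A b x"
  define t where "t = 2 * (gx \<bullet> gx) / (gx \<bullet> (A *v gx))"
  define y where "y = x - t *\<^sub>R gx"
  define gy where "gy = grad_f A b y"
  define \<Delta> where "\<Delta> = (gy \<bullet> (A *v gy)) * (gx \<bullet> (A *v gx)) - (gx \<bullet> (A *v gy))^2"
  define \<alpha> where "\<alpha> = ((gy \<bullet> gx) * (gx \<bullet> (A *v gy)) - (gx \<bullet> gx) * (gy \<bullet> (A *v gy))) / \<Delta>"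
  define \<beta> where "\<beta> = (- (gy \<bullet> gx) * (gx \<bullet> (A *v gx)) + (gx \<bullet> gx) * (gy \<bullet> (A *v gx))) / \<Delta>"
  define \<tau> where "\<tau> = (gx \<bullet> gx) / (gx \<bullet> (A *v gx))"
  have ME: "ME_step A b x = (if lin_indep2 gx gy then x + \<alpha> *\<^sub>R gx + \<beta> *\<^sub>R gy else (1/2) *\<^sub>R (x + y))"
    unfolding ME_step_def Let_def gx_def[symmetric] t_def[symmetric] y_def[symmetric] gy_def[symmetric]
      \<Delta>_def[symmetric] \<alpha>_def[symmetric] \<beta>_def[symmetric] ..
  have a0: "gx \<bullet> (A *v gx) > 0" using pd gnz gx_def by simp
  show ?thesis
  proof (cases "lin_indep2 gx gy")
    case False
    have "x + y = 2 *\<^sub>R x - t *\<^sub>R gx" by (simp add: y_def scaleR_2)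
    then have "(1/2) *\<^sub>R (x + y) = x - (t/2) *\<^sub>R gx" by (simp add: scaleR_diff_right)
    moreover have "t/2 = \<tau>" by (simp add: t_def \<tau>_def)
    ultimately have "(1/2) *\<^sub>R (x + y) = x - \<tau> *\<^sub>R gx" by simp
    then show ?thesis using ME False by (simp add: gx_def[symmetric] \<tau>_def[symmetric])
  next
    case True
    define a where "a = gx \<bullet> (A *v gx)"
    define p where "p = gx \<bullet> (A *v gy)"
    define d where "d = gy \<bullet> (A *v gy)"
    define s where "s = gx \<bullet> gx"
    define r where "r = gy \<bullet> gx"
    have p2: "gy \<bullet> (A *v gx) = p" unfolding p_def using sym_dot[OF sym, of gx gy] by (simp add: inner_commute)
    have D: "\<Delta> = d * a - p^2" unfolding \<Delta>_def d_def a_def p_def ..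
    define w where "w = a *\<^sub>R gy - p *\<^sub>R gx"
    have "w \<noteq> 0"
    proof
      assume "w = 0"
      then have "(- p) *\<^sub>R gx + a *\<^sub>R gy = 0" unfolding w_def by (simp add: algebra_simps)
      then have "a = 0" using True unfolding lin_indep2_def by blast
      then show False using a0 a_def by simp
    qed
    then have wpos: "w \<bullet> (A *v w) > 0" by (rule pd)
    have "w \<bullet> (A *v w) = a * \<Delta>"
      unfolding w_def D using p2
      by (simp add: matrix_vector_mult_diff_distrib matrix_vector_mult_scaleR inner_diff_left inner_diff_right
            a_def[symmetric] d_def[symmetric] p_def[symmetric] power2_eq_square algebra_simps)
    then have Dpos: "\<Delta> > 0" using wpos a0 a_def by (simp add: zero_less_mult_iff)
    define xn where "xn = x + \<alpha> *\<^sub>R gx + \<beta> *\<^sub>R gy"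
    have gxn: "grad_f A b xn = gx + \<alpha> *\<^sub>R (A *v gx) + \<beta> *\<^sub>R (A *v gy)"
      unfolding xn_def grad_f_def gx_def by (simp add: matrix_vector_right_distrib matrix_vector_mult_scaleR algebra_simps)
    have al: "\<alpha> = (r * p - s * d) / \<Delta>" unfolding \<alpha>_def r_def p_def s_def d_def ..
    have be: "\<beta> = (- r * a + s * p) / \<Delta>" unfolding \<beta>_def r_def a_def s_def p2 ..
    have o1: "grad_f A b xn \<bullet> gx = 0"
    proof -
      have "grad_f A b xn \<bullet> gx = gx \<bullet> gx + \<alpha> * ((A *v gx) \<bullet> gx) + \<beta> * ((A *v gy) \<bullet> gx)"
        unfolding gxn by (simp add: inner_add_left)
      moreover have "(A *v gx) \<bullet> gx = a" by (simp add: a_def inner_commute)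
      moreover have "(A *v gy) \<bullet> gx = p" by (simp add: p_def inner_commute)
      ultimately have "grad_f A b xn \<bullet> gx = s + \<alpha> * a + \<beta> * p" by (simp add: s_def)
      also have "\<dots> = 0"
      proof -
        have "\<Delta> * (s + \<alpha> * a + \<beta> * p) = \<Delta> * s + (r * p - s * d) * a + (- r * a + s * p) * p"
          using Dpos unfolding al be by (simp add: field_simps)
        also have "\<dots> = 0" unfolding D by (simp add: algebra_simps power2_eq_square)
        finally show ?thesis using Dpos by simp
      qed
      finally show ?thesis .
    qed
    have o2: "grad_f A b xn \<bullet> gy = 0"
    proof -
      have "grad_f A b xn \<bullet> gy = gx \<bullet> gy + \<alpha> * ((A *v gx) \<bullet> gy) + \<beta> * ((A *v gy) \<bullet> gy)"
        unfolding gxn by (simp add: inner_add_left)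
      moreover have "(A *v gx) \<bullet> gy = p" using sym_dot[OF sym, of gx gy] by (simp add: p_def)
      moreover have "(A *v gy) \<bullet> gy = d" by (simp add: d_def inner_commute)
      moreover have "gx \<bullet> gy = r" by (simp add: r_def inner_commute)
      ultimately have "grad_f A b xn \<bullet> gy = r + \<alpha> * p + \<beta> * d" by simp
      also have "\<dots> = 0"
      proof -
        have "\<Delta> * (r + \<alpha> * p + \<beta> * d) = \<Delta> * r + (r * p - s * d) * p + (- r * a + s * p) * d"
          using Dpos unfolding al be by (simp add: field_simps)
        also have "\<dots> = 0" unfolding D by (simp add: algebra_simps power2_eq_square)
        finally show ?thesis using Dpos by simp
      qed
      finally show ?thesis .
    qed
    define h where "h = (- \<tau> - \<alpha>) *\<^sub>R gx - \<beta> *\<^sub>R gy"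
    have z: "x - \<tau> *\<^sub>R gx = xn + h" unfolding xn_def h_def by (simp add: algebra_simps)
    have "grad_f A b xn \<bullet> h = 0" unfolding h_def using o1 o2 by (simp add: inner_diff_right)
    then have "quad_f A b c (x - \<tau> *\<^sub>R gx) = quad_f A b c xn + 1/2 * (h \<bullet> (A *v h))"
      unfolding z quad_expand[OF sym] by simp
    then have "quad_f A b c xn \<le> quad_f A b c (x - \<tau> *\<^sub>R gx)" using psd[of h] by simp
    then show ?thesis using ME True xn_def by (simp add: gx_def[symmetric] \<tau>_def[symmetric])
  qed
qed


lemma contraction:
  fixes A :: "real^'n^'n"
  assumes spd: "sym_pos_def A" and gnz: "grad_f A b x \<noteq> 0" and xs: "A *v xs = b"
  shows "quad_f A b c (ME_step A b x) - quad_f A b c xs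
     \<le> (1 - Min (eigenvals A) / Max (eigenvals A)) * (quad_f A b c x - quad_f A b c xs)"
proof -
  have sym: "transpose A = A" and pd: "\<And>v. v \<noteq> 0 \<Longrightarrow> v \<bullet> (A *v v) > 0"
    using spd unfolding sym_pos_def_def by auto
  define m where "m = Min (eigenvals A)"
  define M where "M = Max (eigenvals A)"
  have EF: "0 < m" "m \<le> M" "\<And>w. m * (w \<bullet> w) \<le> w \<bullet> (A *v w)" "\<And>w. w \<bullet> (A *v w) \<le> M * (w \<bullet> w)"
    using eigen_facts[OF spd] unfolding m_def M_def by auto
  define g where "g = grad_f A b x"
  define e where "e = x - xs"
  have ge: "g = A *v e" unfolding g_def e_def grad_f_def using xs by (simp add: matrix_vector_mult_diff_distrib)
  have gxs: "grad_f A b xs = 0" using xs by (simp add: grad_f_def)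
  have Ex: "quad_f A b c x - quad_f A b c xs = 1/2 * (e \<bullet> g)"
    using quad_expand[OF sym, of b c xs e] gxs ge unfolding e_def by simp
  define gg where "gg = g \<bullet> g"
  define gAg where "gAg = g \<bullet> (A *v g)"
  define eg where "eg = e \<bullet> g"
  have gnz': "g \<noteq> 0" using gnz g_def by simp
  have gg0: "gg > 0" using gnz' gg_def by simp
  have gAg0: "gAg > 0" using pd[OF gnz'] gAg_def by simp
  have enz: "e \<noteq> 0" using gnz' ge by auto
  have eg0: "eg > 0" using pd[OF enz] ge eg_def by simp
  define \<tau> where "\<tau> = gg / gAg"
  have LS: "quad_f A b c (x - \<tau> *\<^sub>R g) = quad_f A b c x - gg^2 / (2 * gAg)"
  proof -
    have "quad_f A b c (x + (- \<tau>) *\<^sub>R g) = quad_f A b c x + g \<bullet> ((- \<tau>) *\<^sub>R g) + 1/2 * (((- \<tau>) *\<^sub>R g) \<bullet> (A *v ((- \<tau>) *\<^sub>R g)))"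
      unfolding g_def by (rule quad_expand[OF sym])
    also have "\<dots> = quad_f A b c x - \<tau> * gg + 1/2 * \<tau>^2 * gAg"
      using quadform_scale[of "- \<tau>" g A] by (simp add: gg_def gAg_def)
    also have "\<dots> = quad_f A b c x - gg^2 / (2 * gAg)"
      using gAg0 unfolding \<tau>_def by (simp add: field_simps power2_eq_square)
    finally show ?thesis by simp
  qed
  have step: "quad_f A b c (ME_step A b x) \<le> quad_f A b c (x - \<tau> *\<^sub>R g)"
    using me_step_le[OF spd gnz, of c] unfolding \<tau>_def gg_def gAg_def g_def .
  have b1: "m * eg \<le> gg"
  proof -
    have cs: "eg^2 \<le> (e \<bullet> e) * gg" unfolding eg_def gg_def by (rule Cauchy_Schwarz_ineq)
    have me: "m * (e \<bullet> e) \<le> eg" using EF(3)[of e] ge eg_def by simp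
    have "m * eg * eg = m * eg^2" by (simp add: power2_eq_square)
    also have "\<dots> \<le> m * ((e \<bullet> e) * gg)" using cs EF(1) by (simp add: mult_left_mono)
    also have "\<dots> = (m * (e \<bullet> e)) * gg" by simp
    also have "\<dots> \<le> eg * gg" using me gg0 by (simp add: mult_right_mono)
    finally have "m * eg * eg \<le> gg * eg" by (simp add: mult.commute)
    then show ?thesis using eg0 by simp
  qed
  have b2: "gAg \<le> M * gg" using EF(4)[of g] gAg_def gg_def by simp
  have Mpos: "M > 0" using EF by simp
  have key: "(m / M) * eg * gAg \<le> gg^2"
  proof -
    have "(m / M) * eg * gAg \<le> (m / M) * eg * (M * gg)"
      using mult_left_mono[OF b2, of "(m / M) * eg"] EF(1) Mpos eg0 by simp
    also have "\<dots> = (m * eg) * gg" using Mpos by simp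
    also have "\<dots> \<le> gg * gg" using b1 gg0 by (simp add: mult_right_mono)
    finally show ?thesis by (simp add: power2_eq_square)
  qed
  then have key2: "(m / M) * (1/2 * eg) \<le> gg^2 / (2 * gAg)"
    using gAg0 by (simp add: field_simps)
  have "quad_f A b c (ME_step A b x) - quad_f A b c xs \<le> quad_f A b c x - quad_f A b c xs - gg^2 / (2 * gAg)"
    using step LS by simp
  also have "\<dots> \<le> 1/2 * eg - (m / M) * (1/2 * eg)" using Ex key2 eg_def by simp
  also have "\<dots> = (1 - m / M) * (1/2 * eg)" by (simp add: algebra_simps)
  also have "\<dots> = (1 - m / M) * (quad_f A b c x - quad_f A b c xs)" using Ex eg_def by simp
  finally show ?thesis unfolding m_def M_def .
qed

lemma Enorm:
  fixes A :: "real^'n^'n"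
  assumes sym: "transpose A = A" and xs: "A *v xs = b"
  shows "quad_f A b c z - quad_f A b c xs = 1/2 * ((z - xs) \<bullet> (A *v (z - xs)))"
proof -
  have gxs: "grad_f A b xs = 0" using xs by (simp add: grad_f_def)
  show ?thesis using quad_expand[OF sym, of b c xs "z - xs"] gxs by simp
qed

theorem mainTheorem4:
  fixes A :: "real^'n^'n" and b :: "real^'n" and c :: real and x :: "nat \<Rightarrow> real^'n"
  assumes spd: "sym_pos_def A"
    and iter: "\<And>k. k \<ge> 1 \<Longrightarrow> grad_f A b (x k) \<noteq> 0 \<Longrightarrow> x (Suc k) = ME_step A b (x k)"
  shows "(\<forall>k\<ge>1. grad_f A b (x k) = 0 \<longrightarrow> x k = matrix_inv A *v b)
    \<and> ((\<forall>k\<ge>1. grad_f A b (x k) \<noteq> 0) \<longrightarrow>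
        (\<exists>\<eta>. 0 \<le> \<eta> \<and> \<eta> < 1 \<and> \<eta> \<le> 1 - Min (eigenvals A) / Max (eigenvals A) \<and>
          (\<forall>k\<ge>1.
             quad_f A b c (x (Suc k)) - quad_f A b c (matrix_inv A *v b)
               \<le> \<eta> ^ k * (quad_f A b c (x 1) - quad_f A b c (matrix_inv A *v b))
           \<and> A_norm A (x (Suc k) - matrix_inv A *v b)
               \<le> sqrt \<eta> ^ k * A_norm A (x 1 - matrix_inv A *v b))))"
proof -
  have sym: "transpose A = A" and pd: "\<And>v. v \<noteq> 0 \<Longrightarrow> v \<bullet> (A *v v) > 0"
    using spd unfolding sym_pos_def_def by auto
  have ker: "\<forall>v. A *v v = 0 \<longrightarrow> v = 0"
  proof (intro allI impI)
    fix v assume "A *v v = 0"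
    then show "v = 0" using pd[of v] by auto
  qed
  have inv: "invertible A"
    using ker matrix_left_invertible_ker invertible_left_inverse by blast
  have mi: "A ** matrix_inv A = mat 1 \<and> matrix_inv A ** A = mat 1"
    unfolding matrix_inv_def using inv unfolding invertible_def by (rule someI_ex)
  define xs where "xs = matrix_inv A *v b"
  have Axs: "A *v xs = b" unfolding xs_def
    by (simp add: matrix_vector_mul_assoc mi)
  have P1: "\<forall>k\<ge>1. grad_f A b (x k) = 0 \<longrightarrow> x k = matrix_inv A *v b"
  proof (intro allI impI)
    fix k assume "grad_f A b (x k) = 0"
    then have "A *v x k = b" by (simp add: grad_f_def)
    then have "matrix_inv A *v b = (matrix_inv A ** A) *v x k" by (metis matrix_vector_mul_assoc)
    then show "x k = matrix_inv A *v b" using mi by simp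
  qed
  have P2: "\<exists>\<eta>. 0 \<le> \<eta> \<and> \<eta> < 1 \<and> \<eta> \<le> 1 - Min (eigenvals A) / Max (eigenvals A) \<and>
          (\<forall>k\<ge>1.
             quad_f A b c (x (Suc k)) - quad_f A b c (matrix_inv A *v b)
               \<le> \<eta> ^ k * (quad_f A b c (x 1) - quad_f A b c (matrix_inv A *v b))
           \<and> A_norm A (x (Suc k) - matrix_inv A *v b)
               \<le> sqrt \<eta> ^ k * A_norm A (x 1 - matrix_inv A *v b))"
    if allnz: "\<forall>k\<ge>1. grad_f A b (x k) \<noteq> 0"
  proof -
    define \<eta> where "\<eta> = 1 - Min (eigenvals A) / Max (eigenvals A)"
    have EF: "0 < Min (eigenvals A)" "Min (eigenvals A) \<le> Max (eigenvals A)"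
      using eigen_facts[OF spd] by auto
    have eta0: "0 \<le> \<eta>" unfolding \<eta>_def using EF by (simp add: divide_le_eq_1)
    have eta1: "\<eta> < 1" unfolding \<eta>_def using EF by simp
    define E where "E = (\<lambda>k. quad_f A b c (x k) - quad_f A b c xs)"
    have Enn: "E k = 1/2 * ((x k - xs) \<bullet> (A *v (x k - xs)))" for k
      unfolding E_def by (rule Enorm[OF sym Axs])
    have Ege: "E k \<ge> 0" for k
      using Enn[of k] pd[of "x k - xs"] by (cases "x k - xs = 0") auto
    have stp: "E (Suc k) \<le> \<eta> * E k" if "k \<ge> 1" for k
      using contraction[OF spd allnz[rule_format, OF that] Axs, of c] iter[OF that allnz[rule_format, OF that]]
      unfolding E_def \<eta>_def by simp
    have ind: "E (Suc (Suc j)) \<le> \<eta> ^ (Suc j) * E 1" for j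
    proof (induction j)
      case 0
      then show ?case using stp[of 1] by simp
    next
      case (Suc j)
      have "E (Suc (Suc (Suc j))) \<le> \<eta> * E (Suc (Suc j))" using stp[of "Suc (Suc j)"] by simp
      also have "\<dots> \<le> \<eta> * (\<eta> ^ (Suc j) * E 1)" using Suc.IH eta0 by (rule mult_left_mono)
      finally show ?case by simp
    qed
    have main: "E (Suc k) \<le> \<eta> ^ k * E 1" if k1: "k \<ge> 1" for k
    proof -
      obtain j where "k = Suc j" using k1 by (cases k) auto
      then show ?thesis using ind[of j] by simp
    qed
    have An: "A_norm A (x k - xs) = sqrt (2 * E k)" for k
      unfolding A_norm_def using Enn[of k] by simp
    show ?thesis
    proof (intro exI conjI allI impI)
      show "0 \<le> \<eta>" "\<eta> < 1" by (fact eta0, fact eta1)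
      show "\<eta> \<le> 1 - Min (eigenvals A) / Max (eigenvals A)" unfolding \<eta>_def by simp
      fix k :: nat assume k: "k \<ge> 1"
      show "quad_f A b c (x (Suc k)) - quad_f A b c (matrix_inv A *v b)
               \<le> \<eta> ^ k * (quad_f A b c (x 1) - quad_f A b c (matrix_inv A *v b))"
        using main[OF k] unfolding E_def xs_def .
      have "sqrt (2 * E (Suc k)) \<le> sqrt (\<eta> ^ k * (2 * E 1))"
        using main[OF k] by (simp add: algebra_simps)
      also have "\<dots> = sqrt \<eta> ^ k * sqrt (2 * E 1)" by (simp add: real_sqrt_mult real_sqrt_power)
      finally show "A_norm A (x (Suc k) - matrix_inv A *v b)
               \<le> sqrt \<eta> ^ k * A_norm A (x 1 - matrix_inv A *v b)"
        using An[of "Suc k"] An[of 1] unfolding xs_def by simp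
    qed
  qed
  show ?thesis using P1 P2 by blast
qed

end
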